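(* $\mathrm{EquSLP}\leq_{\mathrm{P}}\mathrm{2SoSSLP}$ (polynomial-time many-one reduction).
   Context: A (division-free, constant-free) SLP computing an integer is a sequence $(b_0,\dots,b_m)$ of integers with $b_0=1$ and $b_i=b_j\circ_i b_k$ for some $j,k<i$, $\circ_i\in\{+,-,\times\}$; it computes $b_m$. $\mathrm{EquSLP}$: given an SLP computing $N\in\mathbb{Z}$, decide whether $N=0$. $\mathrm{2SoSSLP}$: given an SLP computing $N\in\mathbb{Z}$, decide whether $N=a^2+b^2$ for some integers $a,b$. *)

theory Defs
  imports Main
begin

datatype op = Add | Sub | Mul

text \<open>Instruction (oo, j, k) defines the next value b_i = b_j o b_k.\<close>
type_synonym slp = "(op \<times> nat \<times> nat) list"

fun apply_op :: "op \<Rightarrow> int \<Rightarrow> int \<Rightarrow> int" where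
  "apply_op Add x y = x + y"
| "apply_op Sub x y = x - y"
| "apply_op Mul x y = x * y"

definition slp_vals :: "slp \<Rightarrow> int list" where
  "slp_vals P = foldl (\<lambda>bs (oo, j, k). bs @ [apply_op oo (bs ! j) (bs ! k)]) [1] P"

text \<open>Well-formedness: the i-th instruction (0-based) defines b_(i+1) and may only
  refer to b_j, b_k with j, k < i+1.\<close>
definition slp_valid :: "slp \<Rightarrow> bool" where
  "slp_valid P \<longleftrightarrow> (\<forall>i<length P. fst (snd (P ! i)) \<le> i \<and> snd (snd (P ! i)) \<le> i)"

definition slp_value :: "slp \<Rightarrow> int" where
  "slp_value P = last (slp_vals P)"

text \<open>Binary, most significant bit first, digit 0 as symbol 1, digit 1 as symbol 2.\<close>
fun bin :: "nat \<Rightarrow> nat list" where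
  "bin n = (if n < 2 then [n + 1] else bin (n div 2) @ [n mod 2 + 1])"

fun op_sym :: "op \<Rightarrow> nat" where
  "op_sym Add = 4" | "op_sym Sub = 5" | "op_sym Mul = 6"

definition enc_instr :: "op \<times> nat \<times> nat \<Rightarrow> nat list" where
  "enc_instr x = (case x of (oo, j, k) \<Rightarrow> [op_sym oo] @ bin j @ [3] @ bin k @ [3])"

definition enc_slp :: "slp \<Rightarrow> nat list" where
  "enc_slp P = concat (map enc_instr P)"

definition sigma :: "nat set" where
  "sigma = {1..6}"

definition words :: "nat list set" where
  "words = {w. set w \<subseteq> sigma}"

definition EquSLP :: "nat list set" where
  "EquSLP = {w. \<exists>P. slp_valid P \<and> w = enc_slp P \<and> slp_value P = 0}"

definition sum_two_squares :: "int \<Rightarrow> bool" where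
  "sum_two_squares N \<longleftrightarrow> (\<exists>a b :: int. N = a^2 + b^2)"

definition TwoSoSSLP :: "nat list set" where
  "TwoSoSSLP = {w. \<exists>P. slp_valid P \<and> w = enc_slp P \<and> sum_two_squares (slp_value P)}"

datatype dir = Lft | Rgt | Stay

text \<open>States 0..<tm_states, start state 0, halting state 1; tape symbols 0..<tm_syms,
  0 the blank; the tape is indexed by the integers.\<close>
record tm =
  tm_states :: nat
  tm_syms :: nat
  tm_delta :: "nat \<Rightarrow> nat \<Rightarrow> nat \<times> nat \<times> dir"

definition tm_wf :: "tm \<Rightarrow> bool" where
  "tm_wf M \<longleftrightarrow> 2 \<le> tm_states M \<and> 6 < tm_syms M \<and>
     (\<forall>q<tm_states M. \<forall>a<tm_syms M.
        fst (tm_delta M q a) < tm_states M \<and> fst (snd (tm_delta M q a)) < tm_syms M)"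

type_synonym config = "nat \<times> (int \<Rightarrow> nat) \<times> int"

fun move :: "dir \<Rightarrow> int" where
  "move Lft = -1" | "move Rgt = 1" | "move Stay = 0"

fun tm_step :: "tm \<Rightarrow> config \<Rightarrow> config" where
  "tm_step M (q, tp, h) =
     (if q = 1 then (q, tp, h)
      else (case tm_delta M q (tp h) of (q', a, d) \<Rightarrow> (q', tp(h := a), h + move d)))"

definition tm_init :: "nat list \<Rightarrow> config" where
  "tm_init w = (0, \<lambda>i. if 0 \<le> i \<and> i < int (length w) then w ! nat i else 0, 0)"

definition tm_run :: "tm \<Rightarrow> nat \<Rightarrow> nat list \<Rightarrow> config" where
  "tm_run M n w = (tm_step M ^^ n) (tm_init w)"

definition tape_reads :: "(int \<Rightarrow> nat) \<Rightarrow> int \<Rightarrow> nat list \<Rightarrow> bool" where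
  "tape_reads tp h ys \<longleftrightarrow> (\<forall>i<length ys. tp (h + int i) = ys ! i \<and> ys ! i \<noteq> 0)
                         \<and> tp (h + int (length ys)) = 0"

definition computes_within :: "tm \<Rightarrow> nat list \<Rightarrow> nat list \<Rightarrow> nat \<Rightarrow> bool" where
  "computes_within M w ys t \<longleftrightarrow>
     (\<exists>n\<le>t. fst (tm_run M n w) = 1 \<and>
            tape_reads (fst (snd (tm_run M n w))) (snd (snd (tm_run M n w))) ys)"

definition poly_reduces :: "nat list set \<Rightarrow> nat list set \<Rightarrow> bool" where
  "poly_reduces L1 L2 \<longleftrightarrow>
     (\<exists>(f :: nat list \<Rightarrow> nat list) M (c :: nat) (d :: nat). tm_wf M \<and>
        (\<forall>w\<in>words. computes_within M w (f w) (c * (length w + 1) ^ d)) \<and>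
        (\<forall>w\<in>words. w \<in> L1 \<longleftrightarrow> f w \<in> L2))"

end

theory Submission
  imports Defs
begin


declare bin.simps[simp del]

lemma bin_ne: "bin n \<noteq> []"
  by (induction n rule: bin.induct) (subst bin.simps, auto)

lemma bin_digits: "set (bin n) \<subseteq> {1,2}"
proof (induction n rule: bin.induct)
  case (1 n)
  have "n mod 2 + 1 \<in> {1,2::nat}" by (cases "n mod 2 = 0") auto
  moreover have "n < 2 \<Longrightarrow> n + 1 \<in> {1,2::nat}" by auto
  ultimately show ?case using 1 by (subst bin.simps) auto
qed

definition unbin :: "nat list \<Rightarrow> nat" where
  "unbin ds = foldl (\<lambda>acc d. 2*acc + (d - 1)) 0 ds"

lemma unbin_snoc: "unbin (ds @ [d]) = 2 * unbin ds + (d - 1)"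
  by (simp add: unbin_def)

lemma unbin_bin: "unbin (bin n) = n"
proof (induction n rule: bin.induct)
  case (1 n)
  show ?case
  proof (cases "n < 2")
    case True then show ?thesis by (subst bin.simps) (auto simp: unbin_def)
  next
    case False
    then have "bin n = bin (n div 2) @ [n mod 2 + 1]" by (subst bin.simps) simp
    then show ?thesis using 1 False by (simp add: unbin_snoc)
  qed
qed

lemma bin_inj: "bin a = bin b \<Longrightarrow> a = b"
  by (metis unbin_bin)

lemma split3: "set (u::nat list) \<subseteq> {1,2} \<Longrightarrow> set u' \<subseteq> {1,2} \<Longrightarrow> u @ 3 # r = u' @ 3 # r' \<Longrightarrow> u = u' \<and> r = r'"
proof (induction u arbitrary: u')
  case Nil then show ?case by (cases u') auto
next
  case (Cons a u) then show ?case by (cases u') auto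
qed

lemma op_sym_inj: "op_sym a = op_sym b \<Longrightarrow> a = b"
  by (cases a; cases b) auto

lemma op_sym_range: "op_sym a \<in> {4,5,6}"
  by (cases a) auto

lemma enc_instr_split:
  assumes "enc_instr x @ r = enc_instr y @ r'"
  shows "x = y \<and> r = r'"
proof -
  obtain o1 j1 k1 where x: "x = (o1, j1, k1)" by (cases x) auto
  obtain o2 j2 k2 where y: "y = (o2, j2, k2)" by (cases y) auto
  from assms have "op_sym o1 # bin j1 @ 3 # bin k1 @ 3 # r = op_sym o2 # bin j2 @ 3 # bin k2 @ 3 # r'"
    by (simp add: x y enc_instr_def)
  then have a: "op_sym o1 = op_sym o2" and b: "bin j1 @ 3 # (bin k1 @ 3 # r) = bin j2 @ 3 # (bin k2 @ 3 # r')"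
    by auto
  from split3[OF bin_digits bin_digits b] have "bin j1 = bin j2" and c: "bin k1 @ 3 # r = bin k2 @ 3 # r'" by auto
  from split3[OF bin_digits bin_digits c] have "bin k1 = bin k2" "r = r'" by auto
  then show ?thesis using a \<open>bin j1 = bin j2\<close> by (auto simp: x y dest: op_sym_inj bin_inj)
qed

lemma enc_slp_Cons: "enc_slp (x # P) = enc_instr x @ enc_slp P"
  by (simp add: enc_slp_def)

lemma enc_slp_append: "enc_slp (P @ Q) = enc_slp P @ enc_slp Q"
  by (simp add: enc_slp_def)

lemma enc_instr_ne: "enc_instr x \<noteq> []"
  by (cases x) (auto simp: enc_instr_def)

lemma enc_slp_inj: "enc_slp P = enc_slp Q \<Longrightarrow> P = Q"
proof (induction P arbitrary: Q)
  case Nil then show ?case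
    by (cases Q) (auto simp: enc_slp_Cons enc_instr_ne enc_slp_def[of "[]"])
next
  case (Cons x P)
  show ?case
  proof (cases Q)
    case Nil then show ?thesis using Cons.prems
      by (auto simp: enc_slp_Cons enc_instr_ne enc_slp_def[of "[]"])
  next
    case (Cons y Q')
    with Cons.prems have "enc_instr x @ enc_slp P = enc_instr y @ enc_slp Q'" by (simp add: enc_slp_Cons)
    from enc_instr_split[OF this] Cons.IH show ?thesis using Cons by auto
  qed
qed

lemma enc_instr_hd: "\<exists>t. enc_instr x = op_sym (fst x) # t \<and> set t \<subseteq> {1,2,3}"
proof -
  obtain o1 j1 k1 where x: "x = (o1, j1, k1)" by (cases x) auto
  show ?thesis using bin_digits[of j1] bin_digits[of k1] by (auto simp: x enc_instr_def)
qed

lemma enc_slp_hd: "P \<noteq> [] \<Longrightarrow> \<exists>t. enc_slp P = op_sym (fst (hd P)) # t"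
proof (cases P)
  case (Cons x P')
  obtain t where "enc_instr x = op_sym (fst x) # t" using enc_instr_hd by blast
  then show ?thesis using Cons by (simp add: enc_slp_Cons)
qed simp

lemma enc_decomp:
  assumes "enc_slp Q = w @ enc_slp G" "G \<noteq> []"
  shows "\<exists>P. Q = P @ G \<and> w = enc_slp P"
  using assms(1)
proof (induction Q arbitrary: w)
  case Nil
  obtain t where "enc_slp G = op_sym (fst (hd G)) # t" using enc_slp_hd[OF assms(2)] by blast
  then show ?case using Nil by (cases w) (auto simp: enc_slp_def)
next
  case (Cons x Q)
  show ?case
  proof (cases w)
    case Nil
    then have "enc_slp (x # Q) = enc_slp G" using Cons.prems by simp
    then have "x # Q = G" by (rule enc_slp_inj)
    then show ?thesis using Nil by (auto simp: enc_slp_def)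
  next
    case (Cons a w')
    have eq: "enc_instr x @ enc_slp Q = w @ enc_slp G" using Cons.prems by (simp add: enc_slp_Cons)
    obtain t where et: "enc_instr x = op_sym (fst x) # t" "set t \<subseteq> {1,2,3}" using enc_instr_hd by blast
    obtain s where es: "enc_slp G = op_sym (fst (hd G)) # s" using enc_slp_hd[OF assms(2)] by blast
    show ?thesis
    proof (cases "length w < length (enc_instr x)")
      case True
      have "(enc_instr x @ enc_slp Q) ! length w = enc_instr x ! length w" using True by (simp add: nth_append)
      moreover have "(w @ enc_slp G) ! length w = op_sym (fst (hd G))" using es by simp
      ultimately have "enc_instr x ! length w = op_sym (fst (hd G))" using eq by simp
      moreover have "length w \<ge> 1" using Cons by simp
      ultimately have "t ! (length w - 1) = op_sym (fst (hd G))" using et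
        by (auto simp: nth_Cons' split: if_splits)
      moreover have "length w - 1 < length t" using True et Cons by simp
      ultimately have "op_sym (fst (hd G)) \<in> {1,2,3}" using et(2) nth_mem by fastforce
      then show ?thesis using op_sym_range[of "fst (hd G)"] by auto
    next
      case False
      have "enc_instr x = take (length (enc_instr x)) w \<and> enc_slp Q = drop (length (enc_instr x)) w @ enc_slp G"
        using eq False by (simp add: append_eq_append_conv_if)
      then obtain w2 where w2: "w = enc_instr x @ w2"
        by (metis append_take_drop_id)
      then have "enc_slp Q = w2 @ enc_slp G" using eq by simp
      from Cons.IH[OF this] obtain P where "Q = P @ G" "w2 = enc_slp P" by blast
      then show ?thesis using w2 by (intro exI[of _ "x # P"]) (simp add: enc_slp_Cons)
    qed
  qed
qed

definition cnt :: "nat list \<Rightarrow> nat" where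
  "cnt w = length (filter (\<lambda>a. a \<in> {4,5,6}) w)"

lemma cnt_append: "cnt (u @ v) = cnt u + cnt v" by (simp add: cnt_def)

lemma cnt_enc_instr: "cnt (enc_instr x) = 1"
proof -
  obtain t where "enc_instr x = op_sym (fst x) # t" "set t \<subseteq> {1,2,3}" using enc_instr_hd by blast
  moreover have "filter (\<lambda>a. a \<in> {4,5,6}) t = []" using calculation(2)
    by (auto simp: filter_empty_conv)
  ultimately show ?thesis using op_sym_range[of "fst x"] by (simp add: cnt_def)
qed

lemma cnt_enc: "cnt (enc_slp P) = length P"
  by (induction P) (auto simp: enc_slp_Cons cnt_append cnt_enc_instr, simp add: enc_slp_def cnt_def)

definition gadget :: "nat \<Rightarrow> slp" where
  "gadget m = [(Sub,0,0),(Mul,m,m),(Sub,m+1,m+2)]"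

definition fred :: "nat list \<Rightarrow> nat list" where
  "fred w = w @ enc_slp (gadget (cnt w))"

definition stepf :: "int list \<Rightarrow> op \<times> nat \<times> nat \<Rightarrow> int list" where
  "stepf = (\<lambda>bs (oo, j, k). bs @ [apply_op oo (bs ! j) (bs ! k)])"

lemma slp_vals_eq: "slp_vals P = foldl stepf [1] P"
  by (simp add: slp_vals_def stepf_def)

lemma foldl_stepf: "\<exists>zs. foldl stepf bs P = bs @ zs \<and> length zs = length P"
proof (induction P arbitrary: bs)
  case (Cons x P)
  obtain y where y: "stepf bs x = bs @ [y]" by (cases x) (auto simp: stepf_def)
  obtain zs where "foldl stepf (bs @ [y]) P = (bs @ [y]) @ zs \<and> length zs = length P" using Cons by blast
  then show ?case using y by (intro exI[of _ "y # zs"]) simp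
qed simp

lemma len_vals: "length (slp_vals P) = length P + 1"
  using foldl_stepf[of "[1]" P] by (auto simp: slp_vals_eq)

lemma hd_vals: "slp_vals P ! 0 = 1"
  using foldl_stepf[of "[1]" P] by (auto simp: slp_vals_eq)

lemma value_gadget: "slp_value (P @ gadget (length P)) = - ((slp_value P) ^ 2)"
proof -
  let ?vs = "slp_vals P"
  have l: "length ?vs = length P + 1" by (rule len_vals)
  have lst: "?vs ! length P = slp_value P" unfolding slp_value_def
    by (metis l last_conv_nth length_greater_0_conv diff_add_inverse2 zero_less_Suc Suc_eq_plus1 length_0_conv)
  have "slp_vals (P @ gadget (length P)) = foldl stepf ?vs (gadget (length P))"
    by (simp add: slp_vals_eq)
  also have "\<dots> = ?vs @ [0, slp_value P * slp_value P, - (slp_value P * slp_value P)]"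
    using l lst hd_vals[of P] by (simp add: gadget_def stepf_def nth_append)
  finally show ?thesis by (simp add: slp_value_def power2_eq_square)
qed

lemma valid_gadget: "slp_valid (P @ gadget (length P)) \<longleftrightarrow> slp_valid P"
proof
  assume a: "slp_valid (P @ gadget (length P))"
  show "slp_valid P" unfolding slp_valid_def
  proof (intro allI impI)
    fix i assume "i < length P"
    then show "fst (snd (P ! i)) \<le> i \<and> snd (snd (P ! i)) \<le> i"
      using a[unfolded slp_valid_def, rule_format, of i] by (simp add: nth_append)
  qed
next
  assume a: "slp_valid P"
  show "slp_valid (P @ gadget (length P))" unfolding slp_valid_def
  proof (intro allI impI)
    fix i assume i: "i < length (P @ gadget (length P))"
    show "fst (snd ((P @ gadget (length P)) ! i)) \<le> i \<and> snd (snd ((P @ gadget (length P)) ! i)) \<le> i"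
    proof (cases "i < length P")
      case True then show ?thesis using a[unfolded slp_valid_def, rule_format, of i] by (simp add: nth_append)
    next
      case False
      then have "i = length P \<or> i = length P + 1 \<or> i = length P + 2" using i by (auto simp: gadget_def)
      then show ?thesis by (auto simp: nth_append gadget_def)
    qed
  qed
qed

lemma sos_neg: "sum_two_squares (- ((N::int) ^ 2)) \<longleftrightarrow> N = 0"
proof
  assume "sum_two_squares (- (N^2))"
  then obtain a b :: int where "- (N^2) = a^2 + b^2" by (auto simp: sum_two_squares_def)
  moreover have "a^2 + b^2 \<ge> 0" by simp
  ultimately have "N^2 \<le> 0" by linarith
  then show "N = 0" by simp
next
  assume "N = 0" then show "sum_two_squares (- (N^2))" by (auto simp: sum_two_squares_def intro: exI[of _ 0])
qed

lemma reduction_correct: "w \<in> EquSLP \<longleftrightarrow> fred w \<in> TwoSoSSLP"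
proof
  assume "w \<in> EquSLP"
  then obtain P where P: "slp_valid P" "w = enc_slp P" "slp_value P = 0" by (auto simp: EquSLP_def)
  have "fred w = enc_slp (P @ gadget (length P))"
    using P by (simp add: fred_def cnt_enc enc_slp_append)
  moreover have "sum_two_squares (slp_value (P @ gadget (length P)))"
    using P(3) value_gadget[of P] sos_neg[of 0] by simp
  ultimately show "fred w \<in> TwoSoSSLP" unfolding TwoSoSSLP_def
    using P valid_gadget[of P] by blast
next
  assume "fred w \<in> TwoSoSSLP"
  then obtain Q where Q: "slp_valid Q" "fred w = enc_slp Q" "sum_two_squares (slp_value Q)"
    by (auto simp: TwoSoSSLP_def)
  have "enc_slp Q = w @ enc_slp (gadget (cnt w))" using Q by (simp add: fred_def)
  from enc_decomp[OF this] obtain P where P: "Q = P @ gadget (cnt w)" "w = enc_slp P"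
    by (auto simp: gadget_def)
  then have "cnt w = length P" by (simp add: cnt_enc)
  then show "w \<in> EquSLP" using P Q valid_gadget[of P] value_gadget[of P] sos_neg
    unfolding EquSLP_def by auto
qed



definition tape_of :: "nat list \<Rightarrow> int \<Rightarrow> nat" where
  "tape_of xs i = (if 0 \<le> i \<and> i < int (length xs) then xs ! nat i else 0)"

lemma tape_read: "tape_of (A @ x # C) (int (length A)) = x"
  by (simp add: tape_of_def nth_append)

lemma tape_upd: "(tape_of (A @ x # C))(int (length A) := y) = tape_of (A @ y # C)"
  by (rule ext) (auto simp: tape_of_def nth_append nth_Cons' nat_diff_distrib)

lemma tape_snoc: "(tape_of A)(int (length A) := y) = tape_of (A @ [y])"
  by (rule ext) (auto simp: tape_of_def nth_append)

lemma tape_end: "tape_of A (int (length A)) = 0"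
  by (simp add: tape_of_def)

lemma tape_neg: "tape_of A (-1) = 0"
  by (simp add: tape_of_def)

lemma tm_init_tape: "tm_init w = (0, tape_of w, 0)"
  by (simp add: tm_init_def tape_of_def[abs_def])

definition sp :: "nat \<Rightarrow> nat list" where
  "sp p = (if p = 1 then [7,1,3,1,3,6,1] else if p = 2 then [3,1] else if p = 3 then [3,5,2]
           else if p = 4 then [3,2,1] else if p = 5 then [3] else [])"

definition stS :: "nat \<Rightarrow> nat" where "stS p = 10 * p"
definition stG :: "nat \<Rightarrow> nat" where "stG p = 10 * p + 1"
definition stI :: "nat \<Rightarrow> nat" where "stI p = 10 * p + 2"
definition stO :: "nat \<Rightarrow> nat" where "stO p = 10 * p + 3"
definition stA :: "nat \<Rightarrow> nat" where "stA p = 10 * p + 4"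
definition stL :: "nat \<Rightarrow> nat" where "stL p = 10 * p + 5"
definition stE :: "nat \<Rightarrow> nat" where "stE p = (if p = 0 then 0 else 10 * p + 6)"
definition stH :: "nat \<Rightarrow> nat" where "stH p = 10 * p + 7"
definition stW :: "nat \<Rightarrow> nat \<Rightarrow> nat" where "stW p i = 100 + 10 * p + i"

definition dlt_low :: "nat \<Rightarrow> nat \<Rightarrow> nat \<Rightarrow> nat \<times> nat \<times> dir" where
  "dlt_low p r a =
     (if r = 0 then (if a = 7 then (stE p, 7, Rgt) else if a \<in> {4,5,6} then (stG p, a + 4, Rgt) else (stS p, a, Rgt))
      else if r = 1 then (if a = 0 then (stI p, 0, Lft) else (stG p, a, Rgt))
      else if r = 2 then (if a = 2 then (stI p, 1, Lft) else if a = 1 then (stL p, 2, Lft) else (stO p, a, Rgt))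
      else if r = 3 then (stA p, 2, Rgt)
      else if r = 4 then (if a = 0 then (stL p, 1, Lft) else (stA p, a, Rgt))
      else if r = 5 then (if a \<in> {8,9,10} then (stS p, a - 4, Rgt) else (stL p, a, Lft))
      else if r = 6 then (if a = 0 then (stW (p + 1) 0, 0, Stay) else (stE p, a, Rgt))
      else if r = 7 then (if a = 0 then (stS p, 0, Rgt) else (stH p, a, Lft))
      else (1, 0, Stay))"

definition dlt_high :: "nat \<Rightarrow> nat \<Rightarrow> nat \<Rightarrow> nat \<times> nat \<times> dir" where
  "dlt_high p i a =
      (if p = 0 \<or> 5 < p \<or> length (sp p) \<le> i then (1, 0, Stay)
       else if i + 1 < length (sp p) then (stW p (i + 1), sp p ! i, Rgt)
       else (stH p, sp p ! i, Lft))"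

definition dlt :: "nat \<Rightarrow> nat \<Rightarrow> nat \<times> nat \<times> dir" where
  "dlt q a =
   (if q < 100 then
      (if q = 0 then (if a = 0 then (stW 1 0, 0, Stay) else (0, a, Rgt))
       else if q div 10 = 0 \<or> 5 < q div 10 then (1, 0, Stay)
       else if q div 10 = 5 then (if a = 0 then (1, 0, Rgt) else if a = 7 then (57, 5, Lft) else (57, a, Lft))
       else dlt_low (q div 10) (q mod 10) a)
    else dlt_high ((q - 100) div 10) ((q - 100) mod 10) a)"

definition M :: tm where "M = \<lparr>tm_states = 200, tm_syms = 11, tm_delta = dlt\<rparr>"

lemma sp_sym: "x \<in> set (sp p) \<Longrightarrow> x < 11"
  by (auto simp: sp_def split: if_splits)

lemma sp_len: "length (sp p) \<le> 7"
  by (simp add: sp_def)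

lemma dlt_low_wf: "p \<le> 4 \<Longrightarrow> a < 11 \<Longrightarrow> fst (dlt_low p r a) < 200 \<and> fst (snd (dlt_low p r a)) < 11"
  unfolding dlt_low_def
  by (simp add: stS_def stG_def stI_def stO_def stA_def stL_def stE_def stH_def stW_def)

lemma dlt_high_wf: "fst (dlt_high p i a) < 200 \<and> fst (snd (dlt_high p i a)) < 11"
proof (cases "p = 0 \<or> 5 < p \<or> length (sp p) \<le> i")
  case True then show ?thesis by (simp add: dlt_high_def)
next
  case False
  then have "sp p ! i < 11" using sp_sym nth_mem by (meson not_le)
  moreover have "i + 1 < length (sp p) \<Longrightarrow> stW p (i + 1) < 200"
    using False sp_len[of p] by (simp add: stW_def)
  ultimately show ?thesis using False by (simp add: dlt_high_def stH_def)
qed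

lemma M_wf: "tm_wf M"
  unfolding tm_wf_def M_def
proof (simp, intro allI impI)
  fix q a :: nat assume q: "q < 200" and a: "a < 11"
  show "fst (dlt q a) < 200 \<and> fst (snd (dlt q a)) < 11"
  proof (cases "q < 100")
    case True
    then have "q div 10 \<le> 9" by simp
    show ?thesis
    proof (cases "q = 0 \<or> q div 10 = 0 \<or> 5 < q div 10 \<or> q div 10 = 5")
      case True
      then show ?thesis using a \<open>q < 100\<close> by (auto simp: dlt_def stW_def)
    next
      case False
      then have "dlt q a = dlt_low (q div 10) (q mod 10) a" using True by (simp add: dlt_def)
      then show ?thesis using dlt_low_wf[of "q div 10" a "q mod 10"] False a by simp
    qed
  next
    case False
    then show ?thesis using dlt_high_wf by (simp add: dlt_def)
  qed
qed


lemma M_delta[simp]: "tm_delta M = dlt" by (simp add: M_def)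

lemma step_gen: "q \<noteq> 1 \<Longrightarrow> tm_step M (q, tp, h) = (case dlt q (tp h) of (q', a, d) \<Rightarrow> (q', tp(h := a), h + move d))"
  by simp

declare tm_step.simps[simp del]

lemma step_mid: "q \<noteq> 1 \<Longrightarrow> dlt q x = (q', y, d) \<Longrightarrow>
  tm_step M (q, tape_of (A @ x # C), int (length A)) = (q', tape_of (A @ y # C), int (length A) + move d)"
  by (simp add: step_gen tape_read tape_upd)

lemma step_end: "q \<noteq> 1 \<Longrightarrow> dlt q 0 = (q', y, d) \<Longrightarrow>
  tm_step M (q, tape_of A, int (length A)) = (q', tape_of (A @ [y]), int (length A) + move d)"
  by (simp add: step_gen tape_end tape_snoc)

lemma step_end0: "q \<noteq> 1 \<Longrightarrow> dlt q 0 = (q', 0, d) \<Longrightarrow>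
  tm_step M (q, tape_of A, int (length A)) = (q', tape_of A, int (length A) + move d)"
  by (simp add: step_gen tape_end fun_upd_idem)

lemma step_neg: "q \<noteq> 1 \<Longrightarrow> dlt q 0 = (q', 0, d) \<Longrightarrow>
  tm_step M (q, tape_of A, -1) = (q', tape_of A, -1 + move d)"
  by (simp add: step_gen tape_neg fun_upd_idem)

lemma funpow_SucR: "(f ^^ Suc n) x = (f ^^ n) (f x)"
  by (simp only: funpow_Suc_right o_apply)

lemma funpow_SucL: "(f ^^ Suc n) x = f ((f ^^ n) x)"
  by simp

lemma walk_right:
  assumes "q \<noteq> 1" "\<forall>a\<in>set B. dlt q a = (q, g a, Rgt)"
  shows "(tm_step M ^^ length B) (q, tape_of (A @ B @ C), int (length A))
         = (q, tape_of (A @ map g B @ C), int (length A + length B))"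
  using assms(2)
proof (induction B arbitrary: A)
  case Nil then show ?case by simp
next
  case (Cons b B)
  have 1: "tm_step M (q, tape_of (A @ (b # B) @ C), int (length A))
           = (q, tape_of ((A @ [g b]) @ B @ C), int (length (A @ [g b])))"
    using step_mid[OF assms(1), of b q "g b" Rgt A "B @ C"] Cons.prems by simp
  have ih: "(tm_step M ^^ length B) (q, tape_of ((A @ [g b]) @ B @ C), int (length (A @ [g b])))
      = (q, tape_of ((A @ [g b]) @ map g B @ C), int (length (A @ [g b]) + length B))"
    using Cons.prems by (intro Cons.IH) simp
  show ?case
    by (simp only: length_Cons funpow_SucR 1 ih) simp
qed

lemma walk_left:
  assumes "q \<noteq> 1" "\<forall>a\<in>set B. dlt q a = (q, g a, Lft)"
  shows "(tm_step M ^^ length B) (q, tape_of (A @ B @ C), int (length A + length B) - 1)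
         = (q, tape_of (A @ map g B @ C), int (length A) - 1)"
  using assms(2)
proof (induction B arbitrary: A)
  case Nil then show ?case by simp
next
  case (Cons b B)
  have ih: "(tm_step M ^^ length B) (q, tape_of ((A @ [b]) @ B @ C), int (length (A @ [b]) + length B) - 1)
         = (q, tape_of ((A @ [b]) @ map g B @ C), int (length (A @ [b])) - 1)"
    using Cons.prems by (intro Cons.IH) simp
  have 1: "tm_step M (q, tape_of (A @ b # (map g B @ C)), int (length A))
           = (q, tape_of (A @ g b # (map g B @ C)), int (length A) - 1)"
    using step_mid[OF assms(1), of b q "g b" Lft A "map g B @ C"] Cons.prems by simp
  have e1: "int (length A + length (b # B)) - 1 = int (length (A @ [b]) + length B) - 1" by simp
  have e2: "A @ (b # B) @ C = (A @ [b]) @ B @ C" by simp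
  have e3: "(A @ [b]) @ map g B @ C = A @ b # (map g B @ C)" by simp
  have e4: "int (length (A @ [b])) - 1 = int (length A)" by simp
  have "(tm_step M ^^ length (b # B)) (q, tape_of (A @ (b # B) @ C), int (length A + length (b # B)) - 1)
     = tm_step M ((tm_step M ^^ length B) (q, tape_of ((A @ [b]) @ B @ C), int (length (A @ [b]) + length B) - 1))"
    by (simp only: e1 e2 length_Cons funpow_SucL) simp
  also have "\<dots> = (q, tape_of (A @ g b # (map g B @ C)), int (length A) - 1)"
    by (simp only: ih e3 e4 1)
  finally show ?case by simp
qed


lemma dlt_lowI: "1 \<le> p \<Longrightarrow> p \<le> 4 \<Longrightarrow> r < 10 \<Longrightarrow> dlt (10 * p + r) a = dlt_low p r a"
  by (simp add: dlt_def)

lemma st_ne1: assumes "1 \<le> p" shows "stS p \<noteq> 1" "stG p \<noteq> 1" "stI p \<noteq> 1" "stO p \<noteq> 1" "stA p \<noteq> 1"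
  "stL p \<noteq> 1" "stE p \<noteq> 1" "stH p \<noteq> 1" "stW p i \<noteq> 1"
  using assms unfolding stS_def stG_def stI_def stO_def stA_def stL_def stE_def stH_def stW_def by auto


lemma dE0: "dlt (stE 0) a = (if a = 0 then (stW 1 0, 0, Stay) else (stE 0, a, Rgt))"
  by (simp add: dlt_def stE_def)

definition g5 :: "nat \<Rightarrow> nat" where "g5 a = (if a = 7 then 5 else a)"

lemma dH5: "dlt (stH 5) a = (if a = 0 then (1, 0, Rgt) else (stH 5, g5 a, Lft))"
  by (simp add: dlt_def stH_def g5_def)

lemma dW: "1 \<le> p \<Longrightarrow> p \<le> 5 \<Longrightarrow> i < length (sp p) \<Longrightarrow>
  dlt (stW p i) a = (if i + 1 < length (sp p) then (stW p (i + 1), sp p ! i, Rgt) else (stH p, sp p ! i, Lft))"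
proof -
  assume a: "1 \<le> p" "p \<le> 5" "i < length (sp p)"
  then have i: "i < 10" using sp_len[of p] by simp
  then have "(10 * p + i) div 10 = p" "(10 * p + i) mod 10 = i" by simp_all
  then show ?thesis using a by (simp add: dlt_def stW_def dlt_high_def)
qed


definition rch :: "config \<Rightarrow> config \<Rightarrow> nat \<Rightarrow> bool" where
  "rch c c' B \<longleftrightarrow> (\<exists>t\<le>B. (tm_step M ^^ t) c = c')"

lemma rch_trans: "rch c1 c2 B1 \<Longrightarrow> rch c2 c3 B2 \<Longrightarrow> rch c1 c3 (B1 + B2)"
proof -
  assume "rch c1 c2 B1" "rch c2 c3 B2"
  then obtain t1 t2 where "t1 \<le> B1" "(tm_step M ^^ t1) c1 = c2" "t2 \<le> B2" "(tm_step M ^^ t2) c2 = c3"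
    by (auto simp: rch_def)
  then have "(tm_step M ^^ (t2 + t1)) c1 = c3" by (simp add: funpow_add)
  then show ?thesis using \<open>t1 \<le> B1\<close> \<open>t2 \<le> B2\<close> unfolding rch_def
    by (intro exI[of _ "t2 + t1"]) simp
qed

lemma rch_exact: "(tm_step M ^^ t) c = c' \<Longrightarrow> t \<le> B \<Longrightarrow> rch c c' B"
  by (auto simp: rch_def)

lemma rch_mono: "rch c c' B \<Longrightarrow> B \<le> B' \<Longrightarrow> rch c c' B'"
  unfolding rch_def using le_trans by blast

lemma rch_exact_eq: "(tm_step M ^^ t) c = c' \<Longrightarrow> c0 = c \<Longrightarrow> c1 = c' \<Longrightarrow> t \<le> B \<Longrightarrow> rch c0 c1 B"
  by (auto simp: rch_def)

lemma rch_step: "tm_step M c = c' \<Longrightarrow> rch c c' 1"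
  by (rule rch_exact[of 1]) simp_all

lemma rch_refl: "rch c c 0"
  by (rule rch_exact[of 0]) simp_all

lemma bin0: "bin 0 = [1]" by (rule trans[OF bin.simps[of 0]]) simp
lemma bin1: "bin 1 = [2]" by (rule trans[OF bin.simps[of 1]]) simp
lemma bin2: "bin 2 = [2,1]" by (rule trans[OF bin.simps[of 2]]) (simp add: bin1[simplified])
lemma bin_Suc0: "bin (Suc 0) = [2]" using bin1 by simp
lemma bin_ge2: "2 \<le> c \<Longrightarrow> bin c = bin (c div 2) @ [c mod 2 + 1]" by (subst bin.simps) simp

lemma bin_succ: "(\<exists>pr k. bin c = pr @ [1] @ replicate k 2 \<and> bin (c+1) = pr @ [2] @ replicate k 1)
   \<or> (\<exists>k. bin c = replicate (Suc k) 2 \<and> bin (c+1) = 2 # replicate (Suc k) 1)"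
proof (induction c rule: less_induct)
  case (less c)
  consider "c = 0" | "c = 1" | "2 \<le> c \<and> even c" | "2 \<le> c \<and> odd c" by linarith
  then show ?case
  proof cases
    case 1 then show ?thesis using bin0 bin1 by (intro disjI1 exI[of _ "[]"] exI[of _ 0]) simp
  next
    case 2
    then have "bin c = [2]" "bin (c+1) = [2,1]" using bin1 bin2 by (simp_all only: one_add_one)
    then show ?thesis by (intro disjI2 exI[of _ 0]) simp
  next
    case 3
    then have "bin c = bin (c div 2) @ [1]" "bin (c+1) = bin (c div 2) @ [2]"
      using bin_ge2[of c] bin_ge2[of "c+1"] by (auto elim: evenE)
    then show ?thesis by (intro disjI1 exI[of _ "bin (c div 2)"] exI[of _ 0]) simp
  next
    case 4
    then have e: "bin c = bin (c div 2) @ [2]" "bin (c+1) = bin (c div 2 + 1) @ [1]"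
      using bin_ge2[of c] bin_ge2[of "c+1"] by (auto elim!: oddE)
    have "c div 2 < c" using 4 by simp
    from less[OF this] show ?thesis
    proof
      assume "\<exists>pr k. bin (c div 2) = pr @ [1] @ replicate k 2 \<and> bin (c div 2 + 1) = pr @ [2] @ replicate k 1"
      then obtain pr k where "bin (c div 2) = pr @ [1] @ replicate k 2" "bin (c div 2 + 1) = pr @ [2] @ replicate k 1" by blast
      then show ?thesis using e
        by (intro disjI1 exI[of _ pr] exI[of _ "Suc k"]) (simp add: replicate_append_same[symmetric])
    next
      assume "\<exists>k. bin (c div 2) = replicate (Suc k) 2 \<and> bin (c div 2 + 1) = 2 # replicate (Suc k) 1"
      then obtain k where "bin (c div 2) = replicate (Suc k) 2" "bin (c div 2 + 1) = 2 # replicate (Suc k) 1" by blast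
      then show ?thesis using e
        by (intro disjI2 exI[of _ "Suc k"]) (simp add: replicate_append_same del: replicate_Suc, simp add: replicate_append_same)
    qed
  qed
qed

lemma bin_len_succ: "length (bin c) \<le> length (bin (c+1))"
  using bin_succ[of c] by auto

lemma bin_len_mono: "c \<le> c' \<Longrightarrow> length (bin c) \<le> length (bin c')"
proof (induction c' rule: dec_induct)
  case (step n) then show ?case using bin_len_succ[of n] by simp
qed simp

lemma bin_len_le: "length (bin c) \<le> c + 1"
proof (induction c rule: bin.induct)
  case (1 n)
  show ?case
  proof (cases "n < 2")
    case True then show ?thesis by (subst bin.simps) simp
  next
    case False then show ?thesis using 1 bin_ge2[of n] by simp
  qed
qed

lemma bin_nz: "0 \<notin> set (bin c)" "8 \<notin> set (bin c)" "9 \<notin> set (bin c)" "10 \<notin> set (bin c)"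
  using bin_digits[of c] by auto

context
  fixes p :: nat
  assumes p1: "1 \<le> p" and p4: "p \<le> 4"
begin

lemma dS: "dlt (stS p) a = (if a = 7 then (stE p, 7, Rgt) else if a \<in> {4,5,6} then (stG p, a + 4, Rgt) else (stS p, a, Rgt))"
  using dlt_lowI[OF p1 p4, of 0 a] by (simp add: stS_def dlt_low_def)
lemma dG: "dlt (stG p) a = (if a = 0 then (stI p, 0, Lft) else (stG p, a, Rgt))"
  using dlt_lowI[OF p1 p4, of 1 a] by (simp add: stG_def dlt_low_def)
lemma dI: "dlt (stI p) a = (if a = 2 then (stI p, 1, Lft) else if a = 1 then (stL p, 2, Lft) else (stO p, a, Rgt))"
  using dlt_lowI[OF p1 p4, of 2 a] by (simp add: stI_def dlt_low_def)
lemma dO: "dlt (stO p) a = (stA p, 2, Rgt)"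
  using dlt_lowI[OF p1 p4, of 3 a] by (simp add: stO_def dlt_low_def)
lemma dA: "dlt (stA p) a = (if a = 0 then (stL p, 1, Lft) else (stA p, a, Rgt))"
  using dlt_lowI[OF p1 p4, of 4 a] by (simp add: stA_def dlt_low_def)
lemma dL: "dlt (stL p) a = (if a \<in> {8,9,10} then (stS p, a - 4, Rgt) else (stL p, a, Lft))"
  using dlt_lowI[OF p1 p4, of 5 a] by (simp add: stL_def dlt_low_def)
lemma dE: "dlt (stE p) a = (if a = 0 then (stW (p + 1) 0, 0, Stay) else (stE p, a, Rgt))"
  using dlt_lowI[OF p1 p4, of 6 a] p1 by (simp add: stE_def dlt_low_def)
lemma dH: "dlt (stH p) a = (if a = 0 then (stS p, 0, Rgt) else (stH p, a, Lft))"
  using dlt_lowI[OF p1 p4, of 7 a] by (simp add: stH_def dlt_low_def)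


lemma ne1[simp]: "stS p \<noteq> 1" "stG p \<noteq> 1" "stI p \<noteq> 1" "stO p \<noteq> 1" "stA p \<noteq> 1"
  "stL p \<noteq> 1" "stE p \<noteq> 1" "stH p \<noteq> 1"
  "stS p \<noteq> Suc 0" "stG p \<noteq> Suc 0" "stI p \<noteq> Suc 0" "stO p \<noteq> Suc 0" "stA p \<noteq> Suc 0"
  "stL p \<noteq> Suc 0" "stE p \<noteq> Suc 0" "stH p \<noteq> Suc 0"
  using st_ne1[OF p1] by simp_all

lemma incr:
  assumes X: "X \<noteq> []" "last X \<notin> {0,1,2}"
  shows "\<exists>h'. int (length X) - 1 \<le> h' \<and> h' < int (length X + length (bin (c+1))) \<and>
    rch (stI p, tape_of (X @ bin c), int (length X + length (bin c)) - 1) (stL p, tape_of (X @ bin (c+1)), h')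
        (2 * length (bin c) + 4)"
  using bin_succ[of c]
proof
  assume "\<exists>pr k. bin c = pr @ [1] @ replicate k 2 \<and> bin (c+1) = pr @ [2] @ replicate k 1"
  then obtain pr k where b: "bin c = pr @ [1] @ replicate k 2" "bin (c+1) = pr @ [2] @ replicate k 1" by blast
  have w: "(tm_step M ^^ length (replicate k (2::nat))) (stI p, tape_of ((X @ pr @ [1]) @ replicate k 2 @ []), int (length (X @ pr @ [1]) + length (replicate k (2::nat))) - 1)
      = (stI p, tape_of ((X @ pr @ [1]) @ map (\<lambda>_::nat. 1::nat) (replicate k (2::nat)) @ []), int (length (X @ pr @ [1])) - 1)"
    by (rule walk_left) (auto simp: dI)
  then have w': "rch (stI p, tape_of (X @ bin c), int (length X + length (bin c)) - 1)
      (stI p, tape_of ((X @ pr) @ 1 # replicate k 1), int (length (X @ pr))) k"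
    using b by (intro rch_exact) (auto simp: algebra_simps)
  have s: "tm_step M (stI p, tape_of ((X @ pr) @ 1 # replicate k 1), int (length (X @ pr)))
      = (stL p, tape_of ((X @ pr) @ 2 # replicate k 1), int (length (X @ pr)) - 1)"
    by (rule step_mid[THEN trans]) (auto simp: dI)
  have "rch (stI p, tape_of (X @ bin c), int (length X + length (bin c)) - 1)
      (stL p, tape_of ((X @ pr) @ 2 # replicate k 1), int (length (X @ pr)) - 1) (k + 1)"
    by (rule rch_trans[OF w' rch_step[OF s]])
  moreover have "k + 1 \<le> 2 * length (bin c) + 4" using b by simp
  ultimately have "rch (stI p, tape_of (X @ bin c), int (length X + length (bin c)) - 1)
      (stL p, tape_of ((X @ pr) @ 2 # replicate k 1), int (length (X @ pr)) - 1) (2 * length (bin c) + 4)"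
    by (rule rch_mono)
  then show ?thesis using b by (intro exI[of _ "int (length (X @ pr)) - 1"]) simp
next
  assume "\<exists>k. bin c = replicate (Suc k) 2 \<and> bin (c+1) = 2 # replicate (Suc k) 1"
  then obtain k where b: "bin c = replicate (Suc k) 2" "bin (c+1) = 2 # replicate (Suc k) 1" by blast
  obtain X' d where Xd: "X = X' @ [d]" using X(1) by (metis append_butlast_last_id)
  have d: "d \<notin> {0,1,2}" using X(2) Xd by simp
  have w: "(tm_step M ^^ length (replicate (Suc k) (2::nat))) (stI p, tape_of (X @ replicate (Suc k) 2 @ []), int (length X + length (replicate (Suc k) (2::nat))) - 1)
      = (stI p, tape_of (X @ map (\<lambda>_::nat. 1::nat) (replicate (Suc k) (2::nat)) @ []), int (length X) - 1)"
    by (rule walk_left) (auto simp: dI)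
  have "(tm_step M ^^ Suc k) (stI p, tape_of (X @ bin c), int (length X + length (bin c)) - 1)
     = (tm_step M ^^ length (replicate (Suc k) (2::nat))) (stI p, tape_of (X @ replicate (Suc k) 2 @ []), int (length X + length (replicate (Suc k) (2::nat))) - 1)"
    by (simp only: b length_replicate append_Nil2)
  also have "\<dots> = (stI p, tape_of (X' @ d # replicate (Suc k) 1), int (length X'))"
    unfolding w by (simp add: Xd)
  finally have r1: "rch (stI p, tape_of (X @ bin c), int (length X + length (bin c)) - 1)
      (stI p, tape_of (X' @ d # replicate (Suc k) 1), int (length X')) (Suc k)"
    by (rule rch_exact) simp
  have s2: "tm_step M (stI p, tape_of (X' @ d # replicate (Suc k) 1), int (length X'))
      = (stO p, tape_of (X @ 1 # replicate k 1), int (length X))"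
    by (rule step_mid[THEN trans]) (use d Xd in \<open>auto simp: dI\<close>)
  have s3: "tm_step M (stO p, tape_of (X @ 1 # replicate k 1), int (length X))
      = (stA p, tape_of ((X @ [2]) @ replicate k 1 @ []), int (length (X @ [2])))"
    by (rule step_mid[THEN trans]) (auto simp: dO)
  have w4: "(tm_step M ^^ length (replicate k (1::nat))) (stA p, tape_of ((X @ [2]) @ replicate k 1 @ []), int (length (X @ [2])))
      = (stA p, tape_of ((X @ [2]) @ map id (replicate k (1::nat)) @ []), int (length (X @ [2]) + length (replicate k (1::nat))))"
    by (rule walk_right) (auto simp: dA)
  have e: "(stA p, tape_of ((X @ [2]) @ map id (replicate k (1::nat)) @ []), int (length (X @ [2]) + length (replicate k (1::nat))))
     = (stA p, tape_of ((X @ [2]) @ replicate k 1), int (length ((X @ [2]) @ replicate k 1)))" by simp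
  have w4': "rch (stA p, tape_of ((X @ [2]) @ replicate k 1 @ []), int (length (X @ [2])))
     (stA p, tape_of ((X @ [2]) @ replicate k 1), int (length ((X @ [2]) @ replicate k 1))) k"
    by (rule rch_exact[OF w4[unfolded e]]) simp
  have s5: "tm_step M (stA p, tape_of ((X @ [2]) @ replicate k 1), int (length ((X @ [2]) @ replicate k 1)))
     = (stL p, tape_of (((X @ [2]) @ replicate k 1) @ [1]), int (length ((X @ [2]) @ replicate k 1)) - 1)"
    by (rule step_end[THEN trans]) (auto simp: dA)
  have "rch (stI p, tape_of (X @ bin c), int (length X + length (bin c)) - 1)
     (stL p, tape_of (((X @ [2]) @ replicate k 1) @ [1]), int (length ((X @ [2]) @ replicate k 1)) - 1)
     (Suc k + 1 + 1 + k + 1)"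
    using rch_trans[OF rch_trans[OF rch_trans[OF rch_trans[OF r1 rch_step[OF s2]] rch_step[OF s3]] w4'] rch_step[OF s5]]
    by simp
  moreover have "Suc k + 1 + 1 + k + 1 \<le> 2 * length (bin c) + 4" using b by simp
  moreover have "((X @ [2]) @ replicate k 1) @ [1] = X @ bin (c + 1)" using b
    by (simp add: replicate_append_same)
  ultimately have "rch (stI p, tape_of (X @ bin c), int (length X + length (bin c)) - 1)
     (stL p, tape_of (X @ bin (c + 1)), int (length X + k)) (2 * length (bin c) + 4)"
    by (auto intro: rch_mono)
  then show ?thesis using b by (intro exI[of _ "int (length X + k)"]) simp
qed


lemma cnt_Cons: "cnt (a # v) = (if a \<in> {4,5,6} then 1 else 0) + cnt v"
  by (simp add: cnt_def)

lemma scan: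
  assumes v: "set v \<subseteq> {1..6}" and pre: "pre \<noteq> []" "set pre \<subseteq> {1..7}" "last pre \<notin> {1,2}"
    and K: "length u + length v + length pre + length (bin (c + cnt v)) \<le> K"
  shows "rch (stS p, tape_of (u @ v @ pre @ bin c), int (length u))
             (stS p, tape_of (u @ v @ pre @ bin (c + cnt v)), int (length u + length v))
             (length v * (4 * K + 8))"
  using v K
proof (induction v arbitrary: u c)
  case Nil
  then show ?case by (simp add: rch_refl cnt_def)
next
  case (Cons a v)
  have a: "a \<in> {1..6}" and vs: "set v \<subseteq> {1..6}" using Cons.prems by auto
  show ?case
  proof (cases "a \<in> {4,5,6}")
    case False
    then have a3: "a \<in> {1,2,3}" using a by auto
    have s1: "tm_step M (stS p, tape_of (u @ a # (v @ pre @ bin c)), int (length u))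
       = (stS p, tape_of ((u @ [a]) @ v @ pre @ bin c), int (length (u @ [a])))"
    proof -
      have "dlt (stS p) a = (stS p, a, Rgt)" using a3 by (auto simp: dS)
      from step_mid[OF ne1(1) this] show ?thesis by simp
    qed
    have cn: "cnt (a # v) = cnt v" using False by (simp add: cnt_Cons)
    have ih: "rch (stS p, tape_of ((u @ [a]) @ v @ pre @ bin c), int (length (u @ [a])))
             (stS p, tape_of ((u @ [a]) @ v @ pre @ bin (c + cnt v)), int (length (u @ [a]) + length v))
             (length v * (4 * K + 8))"
      using Cons.prems cn by (intro Cons.IH) auto
    have "rch (stS p, tape_of (u @ (a # v) @ pre @ bin c), int (length u))
             (stS p, tape_of (u @ (a # v) @ pre @ bin (c + cnt (a # v))), int (length u + length (a # v)))
             (1 + length v * (4 * K + 8))"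
      using rch_trans[OF rch_step[OF s1] ih] cn by simp
    then show ?thesis by (rule rch_mono) simp
  next
    case True
    let ?A = "u @ [a + 4]"
    let ?X = "?A @ v @ pre"
    let ?Y = "v @ pre @ bin (c + 1)"
    have cn: "cnt (a # v) = 1 + cnt v" using True by (simp add: cnt_Cons)
    have Kb: "length (bin (c + 1)) \<le> length (bin (c + cnt (a # v)))"
      using cn by (intro bin_len_mono) simp
    have Kb0: "length (bin c) \<le> length (bin (c + 1))" by (rule bin_len_succ)
    have KK: "length u + 1 + length v + length pre + length (bin (c + 1)) \<le> K"
      using Cons.prems(2) Kb by simp
    have s1: "tm_step M (stS p, tape_of (u @ a # (v @ pre @ bin c)), int (length u))
       = (stG p, tape_of (?A @ (v @ pre @ bin c) @ []), int (length ?A))"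
    proof -
      have "dlt (stS p) a = (stG p, a + 4, Rgt)" using True by (auto simp: dS)
      from step_mid[OF ne1(1) this] show ?thesis by simp
    qed
    have nzB: "\<forall>x\<in>set (v @ pre @ bin c). x \<noteq> 0" using vs pre bin_nz(1)[of c] by (auto, fastforce)
    have w2: "(tm_step M ^^ length (v @ pre @ bin c)) (stG p, tape_of (?A @ (v @ pre @ bin c) @ []), int (length ?A))
       = (stG p, tape_of (?A @ map id (v @ pre @ bin c) @ []), int (length ?A + length (v @ pre @ bin c)))"
      by (rule walk_right) (use nzB in \<open>auto simp: dG\<close>)
    have e2: "(stG p, tape_of (?A @ map id (v @ pre @ bin c) @ []), int (length ?A + length (v @ pre @ bin c)))
       = (stG p, tape_of (?X @ bin c), int (length (?X @ bin c)))" by simp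
    have r2: "rch (stG p, tape_of (?A @ (v @ pre @ bin c) @ []), int (length ?A))
       (stG p, tape_of (?X @ bin c), int (length (?X @ bin c))) K"
      by (rule rch_exact[OF w2[unfolded e2]]) (use KK Kb0 in simp)
    have s3: "tm_step M (stG p, tape_of (?X @ bin c), int (length (?X @ bin c)))
       = (stI p, tape_of (?X @ bin c), int (length ?X + length (bin c)) - 1)"
      by (rule step_end0[THEN trans]) (auto simp: dG)
    have "last pre \<in> set pre" using pre(1) by simp
    then have "last pre \<noteq> 0" using pre(2) by auto
    then have lastX: "last ?X \<notin> {0,1,2}" using pre by auto
    obtain h' where h': "int (length ?X) - 1 \<le> h'" "h' < int (length ?X + length (bin (c+1)))"
      and r4: "rch (stI p, tape_of (?X @ bin c), int (length ?X + length (bin c)) - 1)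
                 (stL p, tape_of (?X @ bin (c+1)), h') (2 * length (bin c) + 4)"
      using incr[of ?X c] lastX by auto
    define j where "j = nat (h' - int (length ?A) + 1)"
    have j1: "j \<le> length ?Y" using h' by (simp add: j_def)
    have j2: "int (length ?A + length (take j ?Y)) - 1 = h'" using h' j1 by (simp add: j_def)
    have nm: "\<forall>x\<in>set (take j ?Y). x \<notin> {8,9,10}"
    proof
      fix x assume "x \<in> set (take j ?Y)"
      then have "x \<in> set ?Y" by (meson in_set_takeD)
      then show "x \<notin> {8,9,10}" using vs pre bin_nz[of "c+1"] by auto
    qed
    have w5: "(tm_step M ^^ length (take j ?Y)) (stL p, tape_of (?A @ take j ?Y @ drop j ?Y), int (length ?A + length (take j ?Y)) - 1)
       = (stL p, tape_of (?A @ map id (take j ?Y) @ drop j ?Y), int (length ?A) - 1)"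
      by (rule walk_left) (use nm in \<open>auto simp: dL\<close>)
    have e5: "(stL p, tape_of (?A @ map id (take j ?Y) @ drop j ?Y), int (length ?A) - 1)
       = (stL p, tape_of (u @ (a + 4) # ?Y), int (length u))"
      by (simp only: list.map_id append_take_drop_id) simp
    have e5': "(stL p, tape_of (?A @ take j ?Y @ drop j ?Y), int (length ?A + length (take j ?Y)) - 1)
       = (stL p, tape_of (?X @ bin (c+1)), h')" by (simp only: j2 append_take_drop_id) simp
    have r5: "rch (stL p, tape_of (?X @ bin (c+1)), h') (stL p, tape_of (u @ (a + 4) # ?Y), int (length u)) K"
      by (rule rch_exact[OF w5[unfolded e5 e5']]) (use j1 KK in simp)
    have s6: "tm_step M (stL p, tape_of (u @ (a + 4) # ?Y), int (length u))
       = (stS p, tape_of ((u @ [a]) @ v @ pre @ bin (c + 1)), int (length (u @ [a])))"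
    proof -
      have "dlt (stL p) (a + 4) = (stS p, a, Rgt)" using True by (auto simp: dL)
      from step_mid[OF ne1(6) this] show ?thesis by simp
    qed
    have ih: "rch (stS p, tape_of ((u @ [a]) @ v @ pre @ bin (c + 1)), int (length (u @ [a])))
             (stS p, tape_of ((u @ [a]) @ v @ pre @ bin (c + 1 + cnt v)), int (length (u @ [a]) + length v))
             (length v * (4 * K + 8))"
      using Cons.prems cn by (intro Cons.IH) auto
    have "rch (stS p, tape_of (u @ a # (v @ pre @ bin c)), int (length u))
             (stS p, tape_of ((u @ [a]) @ v @ pre @ bin (c + 1 + cnt v)), int (length (u @ [a]) + length v))
             (1 + K + 1 + (2 * length (bin c) + 4) + K + 1 + length v * (4 * K + 8))"
    proof -
      have "rch (stS p, tape_of (u @ a # (v @ pre @ bin c)), int (length u))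
           (stG p, tape_of (?X @ bin c), int (length (?X @ bin c))) (1 + K)"
        by (rule rch_trans[OF rch_step[OF s1] r2])
      from rch_trans[OF this rch_step[OF s3]] have "rch (stS p, tape_of (u @ a # (v @ pre @ bin c)), int (length u))
           (stI p, tape_of (?X @ bin c), int (length ?X + length (bin c)) - 1) (1 + K + 1)" .
      from rch_trans[OF this r4] have "rch (stS p, tape_of (u @ a # (v @ pre @ bin c)), int (length u))
           (stL p, tape_of (?X @ bin (c+1)), h') (1 + K + 1 + (2 * length (bin c) + 4))" .
      from rch_trans[OF this r5] have "rch (stS p, tape_of (u @ a # (v @ pre @ bin c)), int (length u))
           (stL p, tape_of (u @ (a + 4) # ?Y), int (length u)) (1 + K + 1 + (2 * length (bin c) + 4) + K)" .
      from rch_trans[OF this rch_step[OF s6]] have "rch (stS p, tape_of (u @ a # (v @ pre @ bin c)), int (length u))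
           (stS p, tape_of ((u @ [a]) @ v @ pre @ bin (c + 1)), int (length (u @ [a]))) (1 + K + 1 + (2 * length (bin c) + 4) + K + 1)" .
      from rch_trans[OF this ih] show ?thesis .
    qed
    moreover have "1 + K + 1 + (2 * length (bin c) + 4) + K + 1 + length v * (4 * K + 8) \<le> length (a # v) * (4 * K + 8)"
      using KK Kb0 by simp
    ultimately show ?thesis using cn by (simp add: rch_mono)
  qed
qed


lemma phase:
  assumes w: "set w \<subseteq> {1..6}" and pre: "pre \<noteq> []" "hd pre = 7" "set pre \<subseteq> {1..7}" "last pre \<notin> {1,2}"
    and K: "length w + length pre + length (bin (c + cnt w)) \<le> K"
  shows "rch (stS p, tape_of (w @ pre @ bin c), 0)
             (stE p, tape_of (w @ pre @ bin (c + cnt w)), int (length w) + 1)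
             (length w * (4 * K + 8) + 1)"
proof -
  have r: "rch (stS p, tape_of ([] @ w @ pre @ bin c), int (length ([]::nat list)))
             (stS p, tape_of ([] @ w @ pre @ bin (c + cnt w)), int (length ([]::nat list) + length w))
             (length w * (4 * K + 8))"
    by (rule scan) (use w pre K in auto)
  obtain pre' where pre': "pre = 7 # pre'" using pre(1,2) by (cases pre) auto
  have s: "tm_step M (stS p, tape_of (w @ 7 # (pre' @ bin (c + cnt w))), int (length w))
     = (stE p, tape_of (w @ 7 # (pre' @ bin (c + cnt w))), int (length w) + 1)"
    by (rule step_mid[THEN trans]) (auto simp: dS)
  have r': "rch (stS p, tape_of (w @ pre @ bin c), 0)
      (stS p, tape_of (w @ 7 # (pre' @ bin (c + cnt w))), int (length w)) (length w * (4 * K + 8))"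
    using r pre' by simp
  show ?thesis using rch_trans[OF r' rch_step[OF s]] pre' by simp
qed

end

lemma sp_props: "1 \<le> p \<Longrightarrow> p \<le> 5 \<Longrightarrow> sp p \<noteq> [] \<and> 0 \<notin> set (sp p)"
  by (auto simp: sp_def)

lemma dE0': "dlt 0 a = (if a = 0 then (stW 1 0, 0, Stay) else (0, a, Rgt))"
  by (simp add: dlt_def)

lemma stW_ne[simp]: "stW p i \<noteq> Suc 0" "stW p i \<noteq> 1" by (simp_all add: stW_def)
lemma stH5_ne[simp]: "stH 5 \<noteq> Suc 0" "stH 5 \<noteq> 1" by (simp_all add: stH_def)

lemma E_props: "p \<le> 4 \<Longrightarrow> stE p \<noteq> 1 \<and> (\<forall>a. a \<noteq> 0 \<longrightarrow> dlt (stE p) a = (stE p, a, Rgt)) \<and> dlt (stE p) 0 = (stW (p+1) 0, 0, Stay)"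
proof (cases "p = 0")
  case True then show ?thesis by (simp add: stE_def dE0')
next
  case False
  assume p: "p \<le> 4"
  then have p1: "1 \<le> p" using False by simp
  show ?thesis using dE[OF p1 p] st_ne1(7)[OF p1] by simp
qed

lemma walk_E:
  assumes p: "p \<le> 4" and Z: "0 \<notin> set B"
  shows "rch (stE p, tape_of (A @ B), int (length A)) (stW (p+1) 0, tape_of (A @ B), int (length (A @ B))) (length B + 1)"
proof -
  have w: "(tm_step M ^^ length B) (stE p, tape_of (A @ B @ []), int (length A))
     = (stE p, tape_of (A @ map id B @ []), int (length A + length B))"
  proof (rule walk_right)
    show "stE p \<noteq> 1" using E_props[OF p] by simp
    show "\<forall>a\<in>set B. dlt (stE p) a = (stE p, id a, Rgt)"
    proof
      fix a assume "a \<in> set B"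
      then have "a \<noteq> 0" using Z by metis
      then show "dlt (stE p) a = (stE p, id a, Rgt)" using E_props[OF p] by simp
    qed
  qed
  have s: "tm_step M (stE p, tape_of (A @ B), int (length (A @ B))) = (stW (p+1) 0, tape_of (A @ B), int (length (A @ B)))"
    using step_end0[of "stE p" "stW (p+1) 0" Stay "A @ B"] E_props[OF p] by simp
  have r: "rch (stE p, tape_of (A @ B), int (length A)) (stE p, tape_of (A @ B), int (length (A @ B))) (length B)"
    by (rule rch_exact_eq[OF w]) simp_all
  show ?thesis using rch_trans[OF r rch_step[OF s]] by simp
qed

lemma write_sp:
  assumes p: "1 \<le> p" "p \<le> 5"
  shows "rch (stW p 0, tape_of Z, int (length Z)) (stH p, tape_of (Z @ sp p), int (length Z + length (sp p)) - 2) (length (sp p))"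
proof -
  have ne: "sp p \<noteq> []" using sp_props[OF p] by simp
  have claim: "i < length (sp p) \<Longrightarrow> (tm_step M ^^ i) (stW p 0, tape_of Z, int (length Z))
      = (stW p i, tape_of (Z @ take i (sp p)), int (length Z + i))" for i
  proof (induction i)
    case 0 then show ?case by simp
  next
    case (Suc i)
    then have i: "i < length (sp p)" "i + 1 < length (sp p)" by simp_all
    have "tm_step M (stW p i, tape_of (Z @ take i (sp p)), int (length (Z @ take i (sp p))))
        = (stW p (i+1), tape_of ((Z @ take i (sp p)) @ [sp p ! i]), int (length (Z @ take i (sp p))) + move Rgt)"
      by (rule step_end) (use i p in \<open>auto simp: st_ne1 dW\<close>)
    then show ?case using Suc i by (simp add: take_Suc_conv_app_nth)
  qed
  define l where "l = length (sp p) - 1"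
  have l: "l < length (sp p)" "Suc l = length (sp p)" using ne by (auto simp: l_def)
  have "tm_step M (stW p l, tape_of (Z @ take l (sp p)), int (length (Z @ take l (sp p))))
        = (stH p, tape_of ((Z @ take l (sp p)) @ [sp p ! l]), int (length (Z @ take l (sp p))) + move Lft)"
    by (rule step_end) (use l p in \<open>auto simp: st_ne1 dW\<close>)
  then have st: "tm_step M ((tm_step M ^^ l) (stW p 0, tape_of Z, int (length Z)))
     = (stH p, tape_of (Z @ sp p), int (length Z + length (sp p)) - 2)"
    using claim[OF l(1)] l by (simp add: take_Suc_conv_app_nth[symmetric])
  have "(tm_step M ^^ Suc l) (stW p 0, tape_of Z, int (length Z))
     = (stH p, tape_of (Z @ sp p), int (length Z + length (sp p)) - 2)"
    by (simp only: funpow_SucL st)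
  then show ?thesis using l by (intro rch_exact) auto
qed

lemma home:
  assumes p: "1 \<le> p" "p \<le> 4" and Y: "0 \<notin> set Y" "Y \<noteq> []"
  shows "rch (stH p, tape_of Y, int (length Y) - 2) (stS p, tape_of Y, 0) (length Y)"
proof -
  have w: "(tm_step M ^^ length (butlast Y)) (stH p, tape_of ([] @ butlast Y @ [last Y]), int (length ([]::nat list) + length (butlast Y)) - 1)
      = (stH p, tape_of ([] @ map id (butlast Y) @ [last Y]), int (length ([]::nat list)) - 1)"
  proof (rule walk_left)
    show "stH p \<noteq> 1" using st_ne1[OF p(1)] by simp
    show "\<forall>a\<in>set (butlast Y). dlt (stH p) a = (stH p, id a, Lft)"
    proof
      fix a assume "a \<in> set (butlast Y)"
      then have "a \<noteq> 0" using Y by (metis in_set_butlastD)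
      then show "dlt (stH p) a = (stH p, id a, Lft)" using dH[OF p] by simp
    qed
  qed
  have s: "tm_step M (stH p, tape_of Y, -1) = (stS p, tape_of Y, 0)"
    by (rule step_neg[THEN trans]) (use p in \<open>auto simp: st_ne1 dH\<close>)
  have l: "length Y \<ge> 1" using Y by (cases Y) auto
  have r: "rch (stH p, tape_of Y, int (length Y) - 2) (stH p, tape_of Y, -1) (length (butlast Y))"
    by (rule rch_exact_eq[OF w]) (use Y l in \<open>simp_all add: of_nat_diff\<close>)
  have "rch (stH p, tape_of Y, int (length Y) - 2) (stS p, tape_of Y, 0) (length (butlast Y) + 1)"
    using rch_trans[OF r rch_step[OF s]] by simp
  then show ?thesis by (rule rch_mono) (use Y in simp)
qed

lemma home5:
  assumes Y: "0 \<notin> set Y" "Y \<noteq> []"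
  shows "rch (stH 5, tape_of Y, int (length Y) - 2) (1, tape_of (map g5 (butlast Y) @ [last Y]), 0) (length Y)"
proof -
  have w: "(tm_step M ^^ length (butlast Y)) (stH 5, tape_of ([] @ butlast Y @ [last Y]), int (length ([]::nat list) + length (butlast Y)) - 1)
      = (stH 5, tape_of ([] @ map g5 (butlast Y) @ [last Y]), int (length ([]::nat list)) - 1)"
  proof (rule walk_left)
    show "stH 5 \<noteq> 1" by simp
    show "\<forall>a\<in>set (butlast Y). dlt (stH 5) a = (stH 5, g5 a, Lft)"
    proof
      fix a assume "a \<in> set (butlast Y)"
      then have "a \<noteq> 0" using Y by (metis in_set_butlastD)
      then show "dlt (stH 5) a = (stH 5, g5 a, Lft)" using dH5 by simp
    qed
  qed
  have s: "tm_step M (stH 5, tape_of (map g5 (butlast Y) @ [last Y]), -1) = (1, tape_of (map g5 (butlast Y) @ [last Y]), 0)"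
    by (rule step_neg[THEN trans]) (auto simp: st_ne1 dH5)
  have l: "length Y \<ge> 1" using Y by (cases Y) auto
  have r: "rch (stH 5, tape_of Y, int (length Y) - 2) (stH 5, tape_of (map g5 (butlast Y) @ [last Y]), -1) (length (butlast Y))"
    by (rule rch_exact_eq[OF w]) (use Y l in \<open>simp_all add: of_nat_diff\<close>)
  have "rch (stH 5, tape_of Y, int (length Y) - 2) (1, tape_of (map g5 (butlast Y) @ [last Y]), 0) (length (butlast Y) + 1)"
    using rch_trans[OF r rch_step[OF s]] by simp
  then show ?thesis by (rule rch_mono) (use Y in simp)
qed

lemma transition:
  assumes p: "p \<le> 3" and Z: "0 \<notin> set (A @ B)"
  shows "rch (stE p, tape_of (A @ B), int (length A)) (stS (p+1), tape_of (A @ B @ sp (p+1)), 0)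
           (length B + 1 + length (sp (p+1)) + length (A @ B @ sp (p+1)))"
proof -
  have r1: "rch (stE p, tape_of (A @ B), int (length A)) (stW (p+1) 0, tape_of (A @ B), int (length (A @ B))) (length B + 1)"
    by (rule walk_E) (use p Z in auto)
  have r2: "rch (stW (p+1) 0, tape_of (A @ B), int (length (A @ B))) (stH (p+1), tape_of ((A @ B) @ sp (p+1)), int (length (A @ B) + length (sp (p+1))) - 2) (length (sp (p+1)))"
    by (rule write_sp) (use p in auto)
  have r3: "rch (stH (p+1), tape_of ((A @ B) @ sp (p+1)), int (length (A @ B) + length (sp (p+1))) - 2) (stS (p+1), tape_of ((A @ B) @ sp (p+1)), 0) (length ((A @ B) @ sp (p+1)))"
    using home[of "p+1" "(A @ B) @ sp (p+1)"] p Z sp_props[of "p+1"] by (simp add: ac_simps)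
  show ?thesis using rch_trans[OF rch_trans[OF r1 r2] r3] by simp
qed

lemma transition_final:
  assumes Z: "0 \<notin> set (A @ B)"
  shows "rch (stE 4, tape_of (A @ B), int (length A)) (1, tape_of (map g5 (A @ B) @ [3]), 0)
           (length B + 1 + 1 + length (A @ B @ [3]))"
proof -
  have r1: "rch (stE 4, tape_of (A @ B), int (length A)) (stW 5 0, tape_of (A @ B), int (length (A @ B))) (length B + 1)"
    using walk_E[of 4 B A] Z by simp
  have r2: "rch (stW 5 0, tape_of (A @ B), int (length (A @ B))) (stH 5, tape_of ((A @ B) @ sp 5), int (length (A @ B) + length (sp 5)) - 2) (length (sp 5))"
    by (rule write_sp) auto
  have sp5: "sp 5 = [3]" by (simp add: sp_def)
  note r2 = r2[unfolded sp5]
  have r3: "rch (stH 5, tape_of ((A @ B) @ [3]), int (length (A @ B) + length [3::nat]) - 2) (1, tape_of (map g5 (butlast ((A @ B) @ [3])) @ [last ((A @ B) @ [3])]), 0) (length ((A @ B) @ [3]))"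
    using home5[of "(A @ B) @ [3]"] Z by simp
  show ?thesis using rch_trans[OF rch_trans[OF r1 r2] r3] sp5 by (simp add: butlast_append)
qed


lemma map_g5_id: "7 \<notin> set xs \<Longrightarrow> map g5 xs = xs"
  by (induction xs) (auto simp: g5_def)

lemma cnt_le: "cnt w \<le> length w"
  by (simp add: cnt_def)

lemma enc_gadget: "enc_slp (gadget m) = [5,1,3,1,3,6] @ bin m @ [3] @ bin m @ [3,5] @ bin (m+1) @ [3] @ bin (m+2) @ [3]"
  by (simp add: gadget_def enc_slp_def enc_instr_def bin0)

lemma bin_sub: "set (bin c) \<subseteq> {1..7}"
  using bin_digits[of c] by auto

lemma trans_tw:
  assumes p: "p \<le> 3" and Z: "0 \<notin> set (A @ B)" and K: "length (A @ B @ sp (p+1)) \<le> K"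
  shows "rch (stE p, tape_of (A @ B), int (length A)) (stS (p+1), tape_of (A @ B @ sp (p+1)), 0) (2 * K + 8)"
proof -
  have "length (sp (p+1)) \<le> 7" by (rule sp_len)
  then show ?thesis using transition[OF p Z] K by (elim rch_mono) simp
qed

lemma phase_w:
  assumes p: "1 \<le> p" "p \<le> 4" and w: "set w \<subseteq> {1..6}" and pre: "hd pre = 7" "set pre \<subseteq> {1..7}" "last pre \<notin> {1,2}" "pre \<noteq> []"
    and K: "length w + length pre + length (bin (c + cnt w)) \<le> K"
  shows "rch (stS p, tape_of (w @ pre @ bin c), 0)
             (stE p, tape_of ((w @ [7]) @ (tl pre @ bin (c + cnt w))), int (length (w @ [7])))
             (length w * (4 * K + 8) + 1)"
proof -
  obtain pre' where "pre = 7 # pre'" using pre by (cases pre) auto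
  then show ?thesis using phase[OF p w pre(4) pre(1) pre(2) pre(3) K] by (simp add: ac_simps)
qed

lemma run_ok:
  assumes w: "set w \<subseteq> {1..6}"
  shows "rch (tm_init w) (1, tape_of (fred w), 0) (1000 * (length w + 1)^2)"
proof -
  define n where "n = length w"
  define m where "m = cnt w"
  define K where "K = 5 * n + 23"
  have mn: "m \<le> n" using cnt_le by (simp add: m_def n_def)
  have bl: "length (bin x) \<le> x + 1" for x by (rule bin_len_le)
  define t1 where "t1 = [1,3,1,3,6::nat]"
  define pre1 where "pre1 = 7 # t1"
  define pre2 where "pre2 = pre1 @ bin m @ [3]"
  define pre3 where "pre3 = pre2 @ bin m @ [3,5]"
  define pre4 where "pre4 = pre3 @ bin (1 + m) @ [3]"
  have w0: "0 \<notin> set w" "7 \<notin> set w" using w by auto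
  have b0: "0 \<notin> set (bin x)" "7 \<notin> set (bin x)" for x using bin_digits[of x] by auto
  have sp1: "sp (0+1) = pre1 @ bin 0" by (simp add: sp_def pre1_def t1_def bin0)
  have sp2: "sp (1+1) = [3] @ bin 0" by (simp add: sp_def bin0)
  have sp3: "sp (2+1) = [3,5] @ bin 1" by (simp add: sp_def bin1 bin_Suc0)
  have sp4: "sp (3+1) = [3] @ bin 2" by (simp add: sp_def bin2)
  have r0: "rch (tm_init w) (stS 1, tape_of (w @ pre1 @ bin 0), 0) (2 * K + 8)"
  proof -
    have "rch (stE 0, tape_of ([] @ w), int (length ([]::nat list))) (stS (0+1), tape_of ([] @ w @ sp (0+1)), 0) (2 * K + 8)"
      by (rule trans_tw) (use w0 in \<open>auto simp: sp_def pre1_def t1_def bin0 K_def n_def\<close>)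
    then show ?thesis by (simp add: tm_init_tape stE_def sp_def pre1_def t1_def bin0)
  qed
  have r1: "rch (stS 1, tape_of (w @ pre1 @ bin 0), 0) (stE 1, tape_of ((w @ [7]) @ (t1 @ bin m)), int (length (w @ [7])))
             (n * (4 * K + 8) + 1)"
    using phase_w[of 1 w pre1 0 K] w bl[of m] mn
    by (simp add: pre1_def t1_def m_def n_def K_def)
  have r1t: "rch (stE 1, tape_of ((w @ [7]) @ (t1 @ bin m)), int (length (w @ [7]))) (stS 2, tape_of (w @ pre2 @ bin 0), 0) (2 * K + 8)"
  proof -
    have "rch (stE 1, tape_of ((w @ [7]) @ (t1 @ bin m)), int (length (w @ [7]))) (stS (1+1), tape_of ((w @ [7]) @ (t1 @ bin m) @ sp (1+1)), 0) (2 * K + 8)"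
      by (rule trans_tw) (use w0 b0 bl[of m] mn in \<open>auto simp: sp_def t1_def bin0 K_def n_def\<close>)
    then show ?thesis by (simp add: stS_def stE_def sp_def bin0 pre2_def pre1_def t1_def)
  qed
  have r2: "rch (stS 2, tape_of (w @ pre2 @ bin 0), 0) (stE 2, tape_of ((w @ [7]) @ (tl pre2 @ bin m)), int (length (w @ [7])))
             (n * (4 * K + 8) + 1)"
    using phase_w[of 2 w pre2 0 K] w bl[of m] mn bin_sub[of m]
    by (simp add: pre2_def pre1_def t1_def m_def n_def K_def)
  have r2t: "rch (stE 2, tape_of ((w @ [7]) @ (tl pre2 @ bin m)), int (length (w @ [7]))) (stS 3, tape_of (w @ pre3 @ bin 1), 0) (2 * K + 8)"
  proof -
    have "rch (stE 2, tape_of ((w @ [7]) @ (tl pre2 @ bin m)), int (length (w @ [7]))) (stS (2+1), tape_of ((w @ [7]) @ (tl pre2 @ bin m) @ sp (2+1)), 0) (2 * K + 8)"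
      by (rule trans_tw) (use w0 b0 bl[of m] mn in \<open>auto simp: sp_def pre2_def pre1_def t1_def bin1 K_def n_def\<close>)
    then show ?thesis by (simp add: stS_def stE_def sp_def bin1 bin_Suc0 pre3_def pre2_def pre1_def t1_def)
  qed
  have r3: "rch (stS 3, tape_of (w @ pre3 @ bin 1), 0) (stE 3, tape_of ((w @ [7]) @ (tl pre3 @ bin (1 + m))), int (length (w @ [7])))
             (n * (4 * K + 8) + 1)"
    using phase_w[of 3 w pre3 1 K] w bl[of m] bl[of "1+m"] mn bin_sub[of m]
    by (simp add: pre3_def pre2_def pre1_def t1_def m_def n_def K_def)
  have r3t: "rch (stE 3, tape_of ((w @ [7]) @ (tl pre3 @ bin (1 + m))), int (length (w @ [7]))) (stS 4, tape_of (w @ pre4 @ bin 2), 0) (2 * K + 8)"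
  proof -
    have "rch (stE 3, tape_of ((w @ [7]) @ (tl pre3 @ bin (1 + m))), int (length (w @ [7]))) (stS (3+1), tape_of ((w @ [7]) @ (tl pre3 @ bin (1 + m)) @ sp (3+1)), 0) (2 * K + 8)"
      by (rule trans_tw) (use w0 b0 bl[of m] bl[of "1+m"] mn in \<open>auto simp: sp_def pre3_def pre2_def pre1_def t1_def bin2 K_def n_def\<close>)
    then show ?thesis by (simp add: stS_def stE_def sp_def bin2 pre4_def pre3_def pre2_def pre1_def t1_def)
  qed
  have r4: "rch (stS 4, tape_of (w @ pre4 @ bin 2), 0) (stE 4, tape_of ((w @ [7]) @ (tl pre4 @ bin (2 + m))), int (length (w @ [7])))
             (n * (4 * K + 8) + 1)"
    using phase_w[of 4 w pre4 2 K] w bl[of m] bl[of "1+m"] bl[of "2+m"] mn bin_sub[of m] bin_sub[of "1+m"]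
    by (simp add: pre4_def pre3_def pre2_def pre1_def t1_def m_def n_def K_def)
  have r4t: "rch (stE 4, tape_of ((w @ [7]) @ (tl pre4 @ bin (2 + m))), int (length (w @ [7])))
       (1, tape_of (map g5 ((w @ [7]) @ (tl pre4 @ bin (2 + m))) @ [3]), 0) (2 * K + 8)"
  proof -
    have "0 \<notin> set ((w @ [7]) @ (tl pre4 @ bin (2 + m)))"
      using w0 b0 by (auto simp: pre4_def pre3_def pre2_def pre1_def t1_def)
    from transition_final[OF this] show ?thesis
      by (elim rch_mono) (use bl[of m] bl[of "1+m"] bl[of "2+m"] mn in \<open>simp add: pre4_def pre3_def pre2_def pre1_def t1_def K_def n_def\<close>)
  qed
  have fin: "map g5 ((w @ [7]) @ (tl pre4 @ bin (2 + m))) @ [3] = fred w"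
  proof -
    have "map g5 ((w @ [7]) @ (tl pre4 @ bin (2 + m))) = w @ [5] @ tl pre4 @ bin (2 + m)"
      using w0(2) b0(2) by (auto simp: map_g5_id g5_def pre4_def pre3_def pre2_def pre1_def t1_def)
    then show ?thesis
      by (simp add: fred_def enc_gadget m_def[symmetric] pre4_def pre3_def pre2_def pre1_def t1_def ac_simps)
  qed
  have all: "rch (tm_init w) (1, tape_of (fred w), 0)
     ((2 * K + 8) + (n * (4 * K + 8) + 1) + (2 * K + 8) + (n * (4 * K + 8) + 1) + (2 * K + 8)
      + (n * (4 * K + 8) + 1) + (2 * K + 8) + (n * (4 * K + 8) + 1) + (2 * K + 8))"
    using rch_trans[OF rch_trans[OF rch_trans[OF rch_trans[OF rch_trans[OF rch_trans[OF rch_trans[OF rch_trans[OF r0 r1] r1t] r2] r2t] r3] r3t] r4] r4t]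
    unfolding fin .
  have "(2 * K + 8) + (n * (4 * K + 8) + 1) + (2 * K + 8) + (n * (4 * K + 8) + 1) + (2 * K + 8)
      + (n * (4 * K + 8) + 1) + (2 * K + 8) + (n * (4 * K + 8) + 1) + (2 * K + 8) \<le> 1000 * (n + 1)^2"
    by (simp add: K_def power2_eq_square algebra_simps)
  then show ?thesis using all by (simp add: n_def rch_mono)
qed


lemma tape_reads_of: "0 \<notin> set ys \<Longrightarrow> tape_reads (tape_of ys) 0 ys"
proof -
  assume z: "0 \<notin> set ys"
  have "\<forall>i<length ys. tape_of ys (0 + int i) = ys ! i \<and> ys ! i \<noteq> 0"
  proof (intro allI impI)
    fix i assume i: "i < length ys"
    have "tape_of ys (0 + int i) = ys ! i" using i by (simp add: tape_of_def)
    moreover have "ys ! i \<noteq> 0" using z nth_mem[OF i] by metis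
    ultimately show "tape_of ys (0 + int i) = ys ! i \<and> ys ! i \<noteq> 0" by blast
  qed
  moreover have "tape_of ys (0 + int (length ys)) = 0" by (simp add: tape_of_def)
  ultimately show ?thesis unfolding tape_reads_def by blast
qed

lemma fred_nz: "set w \<subseteq> {1..6} \<Longrightarrow> 0 \<notin> set (fred w)"
  using bin_digits[of "cnt w"] bin_digits[of "cnt w + 1"] bin_digits[of "cnt w + 2"]
  by (auto simp: fred_def enc_gadget)

lemma computes_ok:
  assumes w: "set w \<subseteq> {1..6}"
  shows "computes_within M w (fred w) (1000 * (length w + 1) ^ 2)"
proof -
  obtain t where t: "t \<le> 1000 * (length w + 1) ^ 2" "(tm_step M ^^ t) (tm_init w) = (1, tape_of (fred w), 0)"
    using run_ok[OF w] by (auto simp: rch_def)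
  then have "tm_run M t w = (1, tape_of (fred w), 0)" by (simp add: tm_run_def)
  then show ?thesis unfolding computes_within_def
    using t(1) tape_reads_of[OF fred_nz[OF w]] by (intro exI[of _ t]) simp
qed

theorem mainTheorem14:
  shows "poly_reduces EquSLP TwoSoSSLP"
  unfolding poly_reduces_def
proof (intro exI conjI)
  show "tm_wf M" by (rule M_wf)
  show "\<forall>w\<in>words. computes_within M w (fred w) (1000 * (length w + 1) ^ 2)"
    using computes_ok by (auto simp: words_def sigma_def)
  show "\<forall>w\<in>words. (w \<in> EquSLP) = (fred w \<in> TwoSoSSLP)"
    using reduction_correct by blast
qed

end
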